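(* Let $K, M, N, d$ be positive integers, $\sigma^2>0$, $P>0$, weights $\omega_1,\ldots,\omega_K>0$, and channel matrices $\boldsymbol{H}_k\in\mathbb{C}^{N\times M}$, $k=1,\ldots,K$. For $\boldsymbol{V}=(\boldsymbol{V}_1,\ldots,\boldsymbol{V}_K)$ with $\boldsymbol{V}_k\in\mathbb{C}^{M\times d}$ and $\sum_{k=1}^K\|\boldsymbol{V}_k\|_F^2>0$, define $$\widetilde{\boldsymbol{F}}_k=\Big(\frac{\sigma^2}{P}\sum_{j=1}^K\|\boldsymbol{V}_j\|_F^2\Big)\boldsymbol{I}+\sum_{j\neq k}\boldsymbol{H}_k\boldsymbol{V}_j\boldsymbol{V}_j^{\mathrm{H}}\boldsymbol{H}_k^{\mathrm{H}}$$ and $$g(\boldsymbol{V})=\sum_{k=1}^K\omega_k\log\left|\boldsymbol{I}+\boldsymbol{V}_k^{\mathrm{H}}\boldsymbol{H}_k^{\mathrm{H}}\widetilde{\boldsymbol{F}}_k^{-1}\boldsymbol{H}_k\boldsymbol{V}_k\right|.$$ Then for any nonzero $\boldsymbol{V}$ and any nonzero scalar $c$, $g(\boldsymbol{V})=g(c\boldsymbol{V})$, and consequently $\nabla g(\boldsymbol{V})\perp\boldsymbol{V}$ for every nonzero $\boldsymbol{V}$, i.e. $\sum_{k=1}^K\Re\{\mathrm{tr}((\nabla_{\boldsymbol{V}_k} g(\boldsymbol{V}))^{\mathrm{H}}\boldsymbol{V}_k)\}=0$.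
   Context: $|\cdot|$ denotes the determinant, $\|\cdot\|_F$ the Frobenius norm, $\cdot^{\mathrm{H}}$ conjugate transpose. The gradient is taken with respect to the complex matrix variables viewed as real vectors, and orthogonality is with respect to the real inner product $\langle \boldsymbol{A},\boldsymbol{B}\rangle=\Re\{\mathrm{tr}(\boldsymbol{A}^{\mathrm{H}}\boldsymbol{B})\}$. *)

theory Defs
  imports "HOL-Analysis.Analysis"
begin

definition cadj :: "complex^'n^'m \<Rightarrow> complex^'m^'n" where
  "cadj A = (\<chi> i j. cnj (A $ j $ i))"

definition frob2 :: "complex^'n^'m \<Rightarrow> real" where
  "frob2 A = (\<Sum>i\<in>UNIV. \<Sum>j\<in>UNIV. (cmod (A $ i $ j))\<^sup>2)"

text \<open>Tuple V = (V_1,...,V_K) is V :: complex^'d^'m^'k, V $ k an M x d matrix;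
  channels H $ k are N x M matrices.\<close>
definition Ftil :: "real \<Rightarrow> real \<Rightarrow> complex^'m^'n^'k \<Rightarrow> complex^'d^'m^'k \<Rightarrow> 'k::finite
    \<Rightarrow> complex^'n^'n" where
  "Ftil \<sigma>2 P H V k =
     mat (complex_of_real (\<sigma>2 / P * (\<Sum>j\<in>UNIV. frob2 (V $ j))))
     + (\<Sum>j\<in>UNIV - {k}. H $ k ** V $ j ** cadj (V $ j) ** cadj (H $ k))"

definition gfun :: "real \<Rightarrow> real \<Rightarrow> real^'k \<Rightarrow> complex^'m^'n^'k
    \<Rightarrow> complex^'d^'m^'k::finite \<Rightarrow> real" where
  "gfun \<sigma>2 P \<omega> H V =
     (\<Sum>k\<in>UNIV. \<omega> $ k * ln (Re (det (mat 1 +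
        cadj (V $ k) ** cadj (H $ k) ** matrix_inv (Ftil \<sigma>2 P H V k) ** H $ k ** V $ k))))"

definition cscale :: "complex \<Rightarrow> complex^'d^'m^'k \<Rightarrow> complex^'d^'m^'k" where
  "cscale c V = (\<chi> k i j. c * V $ k $ i $ j)"

end

theory Submission
  imports Defs
begin

lemma cadj_nth[simp]: "cadj A $ i $ j = cnj (A $ j $ i)"
  by (simp add: cadj_def)

lemma cadj_cadj[simp]: "cadj (cadj A) = A"
  by (simp add: vec_eq_iff)

lemma cadj_mult: "cadj (A ** B) = cadj B ** cadj (A :: complex^_^_)"
  by (simp add: vec_eq_iff matrix_matrix_mult_def mult.commute)

lemma cadj_add: "cadj (A + B) = cadj A + cadj B"
  by (simp add: vec_eq_iff)

lemma cadj_sum: "cadj (sum f S) = sum (\<lambda>j. cadj (f j)) S"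
  by (simp add: vec_eq_iff cadj_def)

lemma cadj_mat: "cadj (mat a) = mat (cnj a)"
  by (simp add: vec_eq_iff mat_def)

lemma cadj_scaleR: "cadj (t *\<^sub>R A) = t *\<^sub>R cadj A"
  by (simp add: vec_eq_iff)

lemma det_cadj: "det (cadj A) = cnj (det (A :: complex^'n^'n))"
proof -
  have "cadj A = transpose (\<chi> i j. cnj (A $ i $ j))"
    by (simp add: vec_eq_iff transpose_def)
  then have "det (cadj A) = det (\<chi> i j. cnj (A $ i $ j))" by simp
  also have "\<dots> = cnj (det A)"
    by (simp add: det_def cnj_sum cnj_prod)
  finally show ?thesis .
qed

definition cinner :: "complex^'n \<Rightarrow> complex^'n \<Rightarrow> complex" where
  "cinner x y = (\<Sum>i\<in>UNIV. cnj (x $ i) * y $ i)"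

lemma cinner_adj: "cinner x (A *v y) = cinner (cadj A *v x) y"
proof -
  have "cinner x (A *v y) = (\<Sum>i\<in>UNIV. \<Sum>j\<in>UNIV. cnj (x $ i) * A $ i $ j * y $ j)"
    by (simp add: cinner_def matrix_vector_mult_def sum_distrib_left mult_ac)
  also have "\<dots> = (\<Sum>j\<in>UNIV. \<Sum>i\<in>UNIV. cnj (x $ i) * A $ i $ j * y $ j)"
    by (rule sum.swap)
  also have "\<dots> = cinner (cadj A *v x) y"
    by (simp add: cinner_def matrix_vector_mult_def sum_distrib_right sum_distrib_left cnj_sum mult_ac)
  finally show ?thesis .
qed

lemma cinner_self: "cinner x x = of_real (\<Sum>i\<in>UNIV. (cmod (x $ i))\<^sup>2)"
  unfolding cinner_def of_real_sum
  by (intro sum.cong) (simp_all del: of_real_power add: complex_norm_square mult.commute)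

lemma Re_cinner_self_ge: "Re (cinner x x) \<ge> 0"
  by (simp add: cinner_self sum_nonneg)

lemma Re_cinner_self_pos: "x \<noteq> 0 \<Longrightarrow> Re (cinner x x) > 0"
proof -
  assume "x \<noteq> 0"
  then obtain i where "x $ i \<noteq> 0" by (auto simp: vec_eq_iff)
  then have "(cmod (x $ i))\<^sup>2 > 0" by simp
  moreover have "(cmod (x $ i))\<^sup>2 \<le> (\<Sum>i\<in>UNIV. (cmod (x $ i))\<^sup>2)"
    by (rule member_le_sum) auto
  ultimately have "(\<Sum>i\<in>UNIV. (cmod (x $ i))\<^sup>2) > 0" by linarith
  then show ?thesis by (simp add: cinner_self)
qed

lemma cinner_add_right: "cinner x (y + z) = cinner x y + cinner x z"
  by (simp add: cinner_def distrib_left sum.distrib)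

lemma cinner_sum_right: "cinner x (sum f S) = sum (\<lambda>j. cinner x (f j)) S"
  unfolding cinner_def sum_component sum_distrib_left by (rule sum.swap)

lemma cinner_scaleR_right: "cinner x (t *\<^sub>R y) = of_real t * cinner x y"
  by (simp add: cinner_def sum_distrib_left mult_ac del: scaleR_conv_of_real) (simp add: scaleR_conv_of_real)

lemma mat_vec: "mat a *v x = (\<chi> i. a * x $ i)"
  by (simp add: vec_eq_iff matrix_vector_mult_def mat_def if_distrib if_distribR cong: if_cong)

lemma cinner_mat: "cinner x (mat a *v x) = a * cinner x x"
  by (simp add: mat_vec cinner_def sum_distrib_left mult_ac)

lemma scaleR_mat_vec: "(t *\<^sub>R A) *v x = t *\<^sub>R (A *v x :: complex^_)"
  by (simp add: vec_eq_iff matrix_vector_mult_def scaleR_sum_right; intro allI sum.cong; simp add: scaleR_conv_of_real)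

lemma coercive_invertible:
  fixes F :: "complex^'n^'n"
  assumes "a > 0" "\<And>x. Re (cinner x (F *v x)) \<ge> a * Re (cinner x x)"
  shows "invertible F"
proof -
  have "inj ((*v) F)"
  proof (rule injI)
    fix x y assume "F *v x = F *v y"
    then have "F *v (x - y) = 0" by (simp add: matrix_vector_mult_diff_distrib)
    then have "a * Re (cinner (x - y) (x - y)) \<le> 0"
      using assms(2)[of "x - y"] by (simp add: cinner_def)
    then have "Re (cinner (x - y) (x - y)) \<le> 0"
      using assms(1) by (simp add: mult_le_0_iff)
    then show "x = y" using Re_cinner_self_pos[of "x - y"] by force
  qed
  then have "det (matrix ((*v) F)) \<noteq> 0"
    using det_nz_iff_inj_gen[of "(*v) F"] by simp
  then show ?thesis by (simp add: invertible_det_nz)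
qed

lemma matrix_inv_works:
  assumes "invertible A"
  shows "A ** matrix_inv A = mat 1" "matrix_inv A ** A = mat 1"
  using someI_ex[OF assms[unfolded invertible_def]] by (auto simp: matrix_inv_def)

lemma matrix_inv_unique:
  assumes "A ** B = mat 1" "B ** A = mat 1"
  shows "matrix_inv A = B"
proof -
  have inv: "invertible A" using assms invertible_def by blast
  have "matrix_inv A = matrix_inv A ** (A ** B)" by (simp add: assms)
  also have "\<dots> = B" by (simp add: matrix_mul_assoc matrix_inv_works[OF inv])
  finally show ?thesis .
qed

lemma cadj_one[simp]: "cadj (mat 1) = mat 1"
  by (simp add: cadj_mat)

lemma cadj_matrix_inv:
  assumes "invertible (A :: complex^'n^'n)"
  shows "cadj (matrix_inv A) = matrix_inv (cadj A)"
proof -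
  have "cadj A ** cadj (matrix_inv A) = mat 1"
    using matrix_inv_works(2)[OF assms] by (metis cadj_mult cadj_one)
  moreover have "cadj (matrix_inv A) ** cadj A = mat 1"
    using matrix_inv_works(1)[OF assms] by (metis cadj_mult cadj_one)
  ultimately show ?thesis by (simp add: matrix_inv_unique)
qed


definition mdiff :: "('a::real_normed_vector \<Rightarrow> complex^'n^'m) \<Rightarrow> 'a \<Rightarrow> bool" where
  "mdiff A x \<longleftrightarrow> (\<forall>i j. (\<lambda>v. A v $ i $ j) differentiable (at x))"

lemma md_const: "mdiff (\<lambda>v. C) x"
  by (simp add: mdiff_def)

lemma md_add: "mdiff A x \<Longrightarrow> mdiff B x \<Longrightarrow> mdiff (\<lambda>v. A v + B v) x"
  by (simp add: mdiff_def)

lemma md_mult: "mdiff A x \<Longrightarrow> mdiff B x \<Longrightarrow> mdiff (\<lambda>v. A v ** B v) x"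
  by (simp add: mdiff_def matrix_matrix_mult_def)

lemma md_sum: "finite S \<Longrightarrow> (\<And>j. j \<in> S \<Longrightarrow> mdiff (A j) x) \<Longrightarrow> mdiff (\<lambda>v. \<Sum>j\<in>S. A j v) x"
  by (auto simp: mdiff_def intro!: differentiable_sum)

lemma cnj_differentiable: "f differentiable (at x) \<Longrightarrow> (\<lambda>v. cnj (f v :: complex)) differentiable (at x)"
  by (rule differentiable_compose[where f=cnj]) (auto intro: bounded_linear_imp_differentiable bounded_linear_cnj)

lemma md_cadj: "mdiff A x \<Longrightarrow> mdiff (\<lambda>v. cadj (A v)) x"
  by (simp add: mdiff_def cnj_differentiable)

lemma md_mat: "f differentiable (at x) \<Longrightarrow> mdiff (\<lambda>v. mat (f v)) x"
  unfolding mdiff_def mat_def by (intro allI, case_tac "i = j") auto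

lemma prod_differentiable:
  fixes f :: "'i \<Rightarrow> 'a::real_normed_vector \<Rightarrow> complex"
  shows "finite S \<Longrightarrow> (\<And>i. i \<in> S \<Longrightarrow> f i differentiable (at x)) \<Longrightarrow>
    (\<lambda>v. \<Prod>i\<in>S. f i v) differentiable (at x)"
  by (induct S rule: finite_induct) auto

lemma det_differentiable:
  assumes "mdiff A x"
  shows "(\<lambda>v. det (A v :: complex^'n^'n)) differentiable (at x)"
  unfolding det_def
  using assms unfolding mdiff_def
  by (intro differentiable_sum differentiable_mult prod_differentiable ballI) auto

definition inv' :: "complex^'n^'n \<Rightarrow> complex^'n^'n" where
  "inv' A = (\<chi> k j. det (\<chi> i l. if l = k then (if i = j then 1 else 0) else A$i$l) / det A)"

lemma matrix_inv_eq_inv':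
  assumes "det A \<noteq> 0"
  shows "matrix_inv A = inv' (A :: complex^'n^'n)"
proof -
  have inv: "invertible A" using assms by (simp add: invertible_det_nz)
  show ?thesis
  proof (subst vec_eq_iff, intro allI, subst vec_eq_iff, intro allI)
    fix k j
    let ?b = "axis j (1::complex) :: complex^'n"
    let ?x = "matrix_inv A *v ?b"
    have "A *v ?x = ?b"
      by (simp add: matrix_vector_mul_assoc matrix_inv_works[OF inv])
    then have "?x = (\<chi> k. det(\<chi> i l. if l=k then ?b$i else A$i$l) / det A)"
      using cramer[OF assms] by blast
    then have "?x $ k = det(\<chi> i l. if l=k then ?b$i else A$i$l) / det A" by simp
    moreover have e: "(\<chi> i l. if l=k then ?b$i else A$i$l) = (\<chi> i l. if l = k then (if i = j then 1 else 0) else A$i$l)"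
      by (simp add: vec_eq_iff axis_def)
    moreover have "?x $ k = matrix_inv A $ k $ j"
      by (simp add: matrix_vector_mult_def axis_def if_distrib if_distribR cong: if_cong)
    ultimately show "matrix_inv A $ k $ j = inv' A $ k $ j"
      unfolding inv'_def by simp
  qed
qed

lemma md_inv':
  assumes "mdiff A x" "det (A x) \<noteq> 0"
  shows "mdiff (\<lambda>v. inv' (A v :: complex^'n^'n)) x"
proof -
  have h: "\<And>k j. mdiff (\<lambda>v. (\<chi> i l. if l = k then (if i = j then 1 else 0) else A v $i$l) :: complex^'n^'n) x"
    using assms(1) unfolding mdiff_def
  proof (intro allI)
    fix k j i l
    assume d: "\<forall>i j. (\<lambda>v. A v $ i $ j) differentiable at x"
    show "(\<lambda>v. (\<chi> i l. if l = k then (if i = j then 1 else 0) else A v $i$l) $ i $ l :: complex) differentiable at x"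
      using d by (cases "l = k") auto
  qed
  have h1: "\<And>k j. (\<lambda>v. det ((\<chi> i l. if l = k then (if i = j then 1 else 0) else A v $i$l) :: complex^'n^'n)) differentiable at x"
    by (rule det_differentiable[OF h])
  have h2: "(\<lambda>v. det (A v)) differentiable at x" by (rule det_differentiable[OF assms(1)])
  show ?thesis unfolding mdiff_def inv'_def
    by (auto intro!: differentiable_divide h1 h2 assms(2))
qed


lemma det_herm_psd_pos:
  fixes Y :: "complex^'n^'n"
  assumes herm: "cadj Y = Y" and psd: "\<And>x. Re (cinner x (Y *v x)) \<ge> 0"
  shows "Re (det (mat 1 + Y)) > 0"
proof -
  define f where "f t = det (mat 1 + t *\<^sub>R Y)" for t :: real
  have nz: "f t \<noteq> 0" if "t \<ge> 0" for t
  proof -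
    have "invertible (mat 1 + t *\<^sub>R Y)"
    proof (rule coercive_invertible[of 1])
      fix x
      have "Re (cinner x ((mat 1 + t *\<^sub>R Y) *v x)) = Re (cinner x x) + t * Re (cinner x (Y *v x))"
        by (simp add: matrix_vector_mult_add_rdistrib cinner_add_right scaleR_mat_vec cinner_scaleR_right)
      also have "\<dots> \<ge> Re (cinner x x)" using psd[of x] that by simp
      finally show "Re (cinner x ((mat 1 + t *\<^sub>R Y) *v x)) \<ge> 1 * Re (cinner x x)" by simp
    qed simp
    then show ?thesis by (simp add: f_def invertible_det_nz)
  qed
  have re: "Im (f t) = 0" for t
  proof -
    have "cadj (mat 1 + t *\<^sub>R Y) = mat 1 + t *\<^sub>R Y"
      by (simp add: cadj_add cadj_scaleR herm)
    then have "f t = cnj (f t)" unfolding f_def by (metis det_cadj)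
    then show ?thesis by (metis cnj.sel(2) equal_neg_zero)
  qed
  have cont: "isCont (\<lambda>t. Re (f t)) t" for t
  proof -
    have "mdiff (\<lambda>t. mat 1 + t *\<^sub>R Y) t"
      unfolding mdiff_def by (auto intro!: differentiable_scaleR)
    then have "f differentiable (at t)" unfolding f_def by (rule det_differentiable)
    then have "(\<lambda>t. Re (f t)) differentiable (at t)"
      by (rule differentiable_compose[where f=Re, rotated])
         (auto intro: bounded_linear_imp_differentiable bounded_linear_Re)
    then show ?thesis using differentiable_imp_continuous_within by blast
  qed
  have "Re (f 1) > 0"
  proof (rule ccontr)
    assume "\<not> Re (f 1) > 0"
    then have "Re (f 1) \<le> 0" by simp
    moreover have "Re (f 0) = 1" by (simp add: f_def)
    ultimately obtain t where t: "0 \<le> t" "t \<le> 1" "Re (f t) = 0"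
      using IVT2[of "\<lambda>t. Re (f t)" 1 0 0] cont by force
    then have "f t = 0" using re[of t] by (simp add: complex_eq_iff)
    then show False using nz t by blast
  qed
  then show ?thesis by (simp add: f_def)
qed


lemma sum_mat_vec: "(sum f S) *v x = (\<Sum>j\<in>S. f j *v x)"
  by (induct S rule: infinite_finite_induct) (simp_all add: matrix_vector_mult_add_rdistrib)

lemma gram_psd: "Re (cinner x ((B ** C ** cadj C ** cadj B) *v x)) \<ge> 0"
proof -
  have e: "B ** C ** cadj C ** cadj B = (B ** C) ** cadj (B ** C)"
    by (simp add: cadj_mult matrix_mul_assoc)
  have "cinner x (((B ** C) ** cadj (B ** C)) *v x) = cinner x ((B ** C) *v (cadj (B ** C) *v x))"
    by (simp only: matrix_vector_mul_assoc)
  also have "\<dots> = cinner (cadj (B ** C) *v x) (cadj (B ** C) *v x)"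
    by (rule cinner_adj)
  finally show ?thesis unfolding e using Re_cinner_self_ge by simp
qed

lemma frob2_nonneg: "frob2 A \<ge> 0"
  by (simp add: frob2_def sum_nonneg)

lemma alpha_pos:
  assumes "\<sigma>2 > 0" "P > 0" "(V :: complex^'d^'m^'k::finite) \<noteq> 0"
  shows "\<sigma>2 / P * (\<Sum>j\<in>UNIV. frob2 (V $ j)) > 0"
proof -
  obtain j i l where nz: "V $ j $ i $ l \<noteq> 0" using assms(3) by (auto simp: vec_eq_iff)
  have "(cmod (V $ j $ i $ l))\<^sup>2 \<le> (\<Sum>l\<in>UNIV. (cmod (V $ j $ i $ l))\<^sup>2)"
    by (rule member_le_sum) auto
  also have "\<dots> \<le> frob2 (V $ j)" unfolding frob2_def
    by (rule member_le_sum[of i]) (auto intro: sum_nonneg)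
  also have "\<dots> \<le> (\<Sum>j\<in>UNIV. frob2 (V $ j))"
    by (rule member_le_sum) (auto intro: frob2_nonneg)
  finally have "(\<Sum>j\<in>UNIV. frob2 (V $ j)) > 0" using nz
    by (meson less_le_trans zero_less_power2 norm_eq_zero zero_less_norm_iff)
  then show ?thesis using assms by simp
qed

lemma Ftil_coercive:
  fixes \<sigma>2 P H V k x
  shows "Re (cinner x (Ftil \<sigma>2 P H V k *v x)) \<ge> (\<sigma>2 / P * (\<Sum>j\<in>UNIV. frob2 (V $ j))) * Re (cinner x x)"
proof -
  have "Re (cinner x (Ftil \<sigma>2 P H V k *v x)) =
     (\<sigma>2 / P * (\<Sum>j\<in>UNIV. frob2 (V $ j))) * Re (cinner x x)
     + (\<Sum>j\<in>UNIV - {k}. Re (cinner x ((H $ k ** V $ j ** cadj (V $ j) ** cadj (H $ k)) *v x)))"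
    unfolding Ftil_def
    by (simp add: matrix_vector_mult_add_rdistrib cinner_add_right sum_mat_vec cinner_sum_right cinner_mat)
  moreover have "(\<Sum>j\<in>UNIV - {k}. Re (cinner x ((H $ k ** V $ j ** cadj (V $ j) ** cadj (H $ k)) *v x))) \<ge> 0"
    by (rule sum_nonneg) (rule gram_psd)
  ultimately show ?thesis by linarith
qed

lemma Ftil_herm: "cadj (Ftil \<sigma>2 P H V k) = Ftil \<sigma>2 P H V k"
  unfolding Ftil_def
  by (simp add: cadj_add cadj_mat cadj_sum cadj_mult matrix_mul_assoc)

lemma Ftil_invertible:
  assumes "\<sigma>2 > 0" "P > 0" "V \<noteq> 0"
  shows "invertible (Ftil \<sigma>2 P H V k)"
  by (rule coercive_invertible[OF alpha_pos[OF assms] Ftil_coercive])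

lemma inner_psd:
  fixes F :: "complex^'n^'n" and X :: "complex^'d^'n"
  assumes inv: "invertible F" and herm: "cadj F = F"
    and psd: "\<And>z. Re (cinner z (F *v z)) \<ge> 0"
  shows "cadj (cadj X ** matrix_inv F ** X) = cadj X ** matrix_inv F ** X"
    and "Re (cinner x ((cadj X ** matrix_inv F ** X) *v x)) \<ge> 0"
proof -
  show "cadj (cadj X ** matrix_inv F ** X) = cadj X ** matrix_inv F ** X"
    by (simp add: cadj_mult cadj_matrix_inv[OF inv] herm matrix_mul_assoc)
  define y where "y = X *v x"
  define z where "z = matrix_inv F *v y"
  have yz: "y = F *v z"
    unfolding z_def by (metis matrix_vector_mul_assoc matrix_inv_works(1)[OF inv] matrix_vector_mul_lid)
  have "cinner x ((cadj X ** matrix_inv F ** X) *v x) = cinner x (cadj X *v z)"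
    by (simp add: matrix_vector_mul_assoc y_def z_def matrix_mul_assoc)
  also have "\<dots> = cinner y z" by (simp add: cinner_adj y_def)
  also have "\<dots> = cinner (F *v z) z" using yz by simp
  also have "\<dots> = cinner z (F *v z)" using cinner_adj[of z F z] herm by simp
  finally show "Re (cinner x ((cadj X ** matrix_inv F ** X) *v x)) \<ge> 0" using psd by simp
qed

lemma summand_pos:
  assumes "\<sigma>2 > 0" "P > 0" "V \<noteq> 0"
  shows "Re (det (mat 1 + cadj (V $ k) ** cadj (H $ k) ** matrix_inv (Ftil \<sigma>2 P H V k) ** H $ k ** V $ k)) > 0"
proof -
  let ?F = "Ftil \<sigma>2 P H V k"
  let ?X = "H $ k ** V $ k"
  have e: "cadj (V $ k) ** cadj (H $ k) ** matrix_inv ?F ** H $ k ** V $ k = cadj ?X ** matrix_inv ?F ** ?X"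
    by (simp add: cadj_mult matrix_mul_assoc)
  have psdF: "Re (cinner z (?F *v z)) \<ge> 0" for z
  proof -
    have "0 \<le> (\<sigma>2 / P * (\<Sum>j\<in>UNIV. frob2 (V $ j))) * Re (cinner z z)"
      by (rule mult_nonneg_nonneg[OF less_imp_le[OF alpha_pos[OF assms]] Re_cinner_self_ge])
    moreover have "Re (cinner z (?F *v z)) \<ge> (\<sigma>2 / P * (\<Sum>j\<in>UNIV. frob2 (V $ j))) * Re (cinner z z)"
      by (rule Ftil_coercive)
    ultimately show ?thesis by linarith
  qed
  show ?thesis unfolding e
    by (rule det_herm_psd_pos[OF inner_psd(1)[OF Ftil_invertible[OF assms] Ftil_herm psdF]
          inner_psd(2)[OF Ftil_invertible[OF assms] Ftil_herm psdF]])
qed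


definition smul :: "complex \<Rightarrow> complex^'n^'m \<Rightarrow> complex^'n^'m" where
  "smul c A = (\<chi> i j. c * A $ i $ j)"

lemma smul_nth[simp]: "smul c A $ i $ j = c * A $ i $ j"
  by (simp add: smul_def)

lemma smul_mult_left: "smul c A ** B = smul c (A ** B)"
  by (simp add: vec_eq_iff matrix_matrix_mult_def sum_distrib_left mult_ac)

lemma smul_mult_right: "A ** smul c B = smul c (A ** B)"
  by (simp add: vec_eq_iff matrix_matrix_mult_def sum_distrib_left mult_ac)

lemma cadj_smul: "cadj (smul c A) = smul (cnj c) (cadj A)"
  by (simp add: vec_eq_iff)

lemma smul_smul: "smul a (smul b A) = smul (a * b) A"
  by (simp add: vec_eq_iff mult_ac)

lemma smul_one: "smul 1 A = A"
  by (simp add: vec_eq_iff)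

lemma smul_add: "smul c (A + B) = smul c A + smul c B"
  by (simp add: vec_eq_iff distrib_left)

lemma smul_sum: "smul c (sum f S) = (\<Sum>j\<in>S. smul c (f j))"
  by (simp add: vec_eq_iff sum_distrib_left)

lemma smul_mat: "smul c (mat a) = mat (c * a)"
  by (simp add: vec_eq_iff mat_def)

lemma frob2_smul: "frob2 (smul c A) = (cmod c)\<^sup>2 * frob2 A"
  by (simp add: frob2_def sum_distrib_left norm_mult power_mult_distrib)

lemma cscale_nth: "cscale c V $ j = smul c (V $ j)"
  by (simp add: vec_eq_iff cscale_def)

lemma c_cnj: "c * cnj c = complex_of_real ((cmod c)\<^sup>2)"
  by (rule complex_norm_square[symmetric])

lemma cnj_c: "cnj c * c = complex_of_real ((cmod c)\<^sup>2)"
  by (metis c_cnj mult.commute)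

lemma Ftil_cscale:
  "Ftil \<sigma>2 P H (cscale c V) k = smul (complex_of_real ((cmod c)\<^sup>2)) (Ftil \<sigma>2 P H V k)"
proof -
  have a: "complex_of_real (\<sigma>2 / P * (\<Sum>j\<in>UNIV. frob2 (cscale c V $ j)))
      = complex_of_real ((cmod c)\<^sup>2) * complex_of_real (\<sigma>2 / P * (\<Sum>j\<in>UNIV. frob2 (V $ j)))"
    by (simp add: cscale_nth frob2_smul sum_distrib_left[symmetric] del: of_real_power)
  have b: "H $ k ** cscale c V $ j ** cadj (cscale c V $ j) ** cadj (H $ k)
      = smul (complex_of_real ((cmod c)\<^sup>2)) (H $ k ** V $ j ** cadj (V $ j) ** cadj (H $ k))" for j
    by (simp add: cscale_nth cadj_smul smul_mult_left smul_mult_right smul_smul cnj_c c_cnj del: of_real_power)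
  show ?thesis
    unfolding Ftil_def a b by (simp add: smul_add smul_sum smul_mat del: of_real_power)
qed

lemma matrix_inv_smul:
  assumes "invertible A" "r \<noteq> 0"
  shows "matrix_inv (smul r A) = smul (inverse r) (matrix_inv A)"
  by (rule matrix_inv_unique)
     (simp_all add: smul_mult_left smul_mult_right smul_smul matrix_inv_works[OF assms(1)] assms(2) smul_one)

lemma gfun_scale:
  assumes "\<sigma>2 > 0" "P > 0" "V \<noteq> 0" "c \<noteq> 0"
  shows "gfun \<sigma>2 P \<omega> H V = gfun \<sigma>2 P \<omega> H (cscale c V)"
  unfolding gfun_def
proof (rule sum.cong[OF refl])
  fix k
  let ?r = "complex_of_real ((cmod c)\<^sup>2)"
  have r: "?r \<noteq> 0" using assms(4) by simp
  have rr: "c * (inverse ?r * cnj c) = 1" using assms(4)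
    by (simp add: c_cnj[symmetric] field_simps del: of_real_power)
  have "cadj (cscale c V $ k) ** cadj (H $ k) ** matrix_inv (Ftil \<sigma>2 P H (cscale c V) k) ** H $ k ** cscale c V $ k
     = smul (c * (inverse ?r * cnj c)) (cadj (V $ k) ** cadj (H $ k) ** matrix_inv (Ftil \<sigma>2 P H V k) ** H $ k ** V $ k)"
    unfolding Ftil_cscale matrix_inv_smul[OF Ftil_invertible[OF assms(1-3)] r]
    by (simp add: cscale_nth cadj_smul smul_mult_left smul_mult_right smul_smul del: of_real_power)
  then show "\<omega> $ k * ln (Re (det (mat 1 + cadj (V $ k) ** cadj (H $ k) ** matrix_inv (Ftil \<sigma>2 P H V k) ** H $ k ** V $ k))) =
         \<omega> $ k * ln (Re (det (mat 1 + cadj (cscale c V $ k) ** cadj (H $ k) ** matrix_inv (Ftil \<sigma>2 P H (cscale c V) k) ** H $ k ** cscale c V $ k)))"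
    by (simp only: rr smul_one)
qed


definition g2 :: "real \<Rightarrow> real \<Rightarrow> real^'k \<Rightarrow> complex^'m^'n^'k
    \<Rightarrow> complex^'d^'m^'k::finite \<Rightarrow> real" where
  "g2 \<sigma>2 P \<omega> H V =
     (\<Sum>k\<in>UNIV. \<omega> $ k * ln (Re (det (mat 1 +
        cadj (V $ k) ** cadj (H $ k) ** inv' (Ftil \<sigma>2 P H V k) ** H $ k ** V $ k))))"

lemma gfun_eq_g2:
  assumes "\<sigma>2 > 0" "P > 0" "V \<noteq> 0"
  shows "gfun \<sigma>2 P \<omega> H V = g2 \<sigma>2 P \<omega> H V"
proof -
  have "matrix_inv (Ftil \<sigma>2 P H V k) = inv' (Ftil \<sigma>2 P H V k)" for k
    using Ftil_invertible[OF assms, of H k] invertible_det_nz matrix_inv_eq_inv' by blast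
  then show ?thesis unfolding gfun_def g2_def by simp
qed

lemma entry_differentiable:
  "(\<lambda>V :: complex^'d^'m^'k. V $ j $ i $ l) differentiable (at x)"
  by (rule bounded_linear_imp_differentiable)
     (intro bounded_linear_compose[OF bounded_linear_vec_nth] bounded_linear_vec_nth)

lemma md_nth: "mdiff (\<lambda>V :: complex^'d^'m^'k. V $ j) x"
  unfolding mdiff_def by (intro allI entry_differentiable)

lemma scalar_differentiable:
  "(\<lambda>V :: complex^'d^'m^'k. complex_of_real (\<sigma>2 / P * (\<Sum>j\<in>UNIV. frob2 (V $ j)))) differentiable (at x)"
proof -
  have e: "(\<lambda>V :: complex^'d^'m^'k. (cmod (V $ j $ i $ l))\<^sup>2) differentiable (at x)" for j i l
    by (rule differentiable_compose[where f="\<lambda>z. (norm z)\<^sup>2"])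
       (auto intro: entry_differentiable)
  have "(\<lambda>V :: complex^'d^'m^'k. \<sigma>2 / P * (\<Sum>j\<in>UNIV. frob2 (V $ j))) differentiable (at x)"
    unfolding frob2_def by (intro differentiable_mult differentiable_const differentiable_sum ballI e; simp)
  then show ?thesis
    by (rule differentiable_compose[where f=of_real, rotated])
       (auto intro: bounded_linear_imp_differentiable bounded_linear_of_real)
qed

lemma md_Ftil: "mdiff (\<lambda>V. Ftil \<sigma>2 P H V k) x"
  unfolding Ftil_def
  by (intro md_add md_mat scalar_differentiable md_sum md_mult md_const md_nth md_cadj) auto

lemma ln_differentiable: "(y::real) > 0 \<Longrightarrow> ln differentiable (at y)"
  unfolding differentiable_def using DERIV_ln[of y] has_field_derivative_imp_has_derivative by blast

lemma g2_differentiable: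
  assumes "\<sigma>2 > 0" "P > 0" "V0 \<noteq> 0"
  shows "g2 \<sigma>2 P \<omega> H differentiable (at V0)"
proof -
  have "(\<lambda>V. \<omega> $ k * ln (Re (det (mat 1 +
        cadj (V $ k) ** cadj (H $ k) ** inv' (Ftil \<sigma>2 P H V k) ** H $ k ** V $ k)))) differentiable (at V0)" for k
  proof -
    have dF: "det (Ftil \<sigma>2 P H V0 k) \<noteq> 0"
      using Ftil_invertible[OF assms] by (simp add: invertible_det_nz)
    have md: "mdiff (\<lambda>V. mat 1 + cadj (V $ k) ** cadj (H $ k) ** inv' (Ftil \<sigma>2 P H V k) ** H $ k ** V $ k) V0"
      by (intro md_add md_mult md_const md_cadj md_nth md_inv' md_Ftil dF)
    have dd: "(\<lambda>V. Re (det (mat 1 + cadj (V $ k) ** cadj (H $ k) ** inv' (Ftil \<sigma>2 P H V k) ** H $ k ** V $ k))) differentiable (at V0)"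
      by (rule differentiable_compose[where f=Re, rotated, OF det_differentiable[OF md]])
         (auto intro: bounded_linear_imp_differentiable bounded_linear_Re)
    have pos: "Re (det (mat 1 + cadj (V0 $ k) ** cadj (H $ k) ** inv' (Ftil \<sigma>2 P H V0 k) ** H $ k ** V0 $ k)) > 0"
      using summand_pos[OF assms, of k H] dF by (simp add: matrix_inv_eq_inv')
    have "(\<lambda>V. ln (Re (det (mat 1 + cadj (V $ k) ** cadj (H $ k) ** inv' (Ftil \<sigma>2 P H V k) ** H $ k ** V $ k)))) differentiable (at V0)"
      by (rule differentiable_compose[where f=ln, OF ln_differentiable[OF pos] dd])
    then show ?thesis by (intro differentiable_mult differentiable_const)
  qed
  then show ?thesis unfolding g2_def
    by (intro differentiable_sum) auto
qed


theorem lemma1: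
  fixes \<sigma>2 P :: real and \<omega> :: "real^'k::finite"
    and H :: "complex^'m::finite^'n::finite^'k"
    and V :: "complex^'d::finite^'m^'k"
  assumes "\<sigma>2 > 0" and "P > 0" and "\<forall>k. \<omega> $ k > 0"
    and "V \<noteq> 0"
  shows "(\<forall>c::complex. c \<noteq> 0 \<longrightarrow> gfun \<sigma>2 P \<omega> H V = gfun \<sigma>2 P \<omega> H (cscale c V))
     \<and> (\<exists>G. (gfun \<sigma>2 P \<omega> H has_derivative (\<lambda>h. G \<bullet> h)) (at V) \<and> G \<bullet> V = 0)"
proof (intro conjI allI impI)
  fix c :: complex assume "c \<noteq> 0"
  then show "gfun \<sigma>2 P \<omega> H V = gfun \<sigma>2 P \<omega> H (cscale c V)"
    using gfun_scale assms(1,2,4) by blast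
next
  obtain D where D2: "(g2 \<sigma>2 P \<omega> H has_derivative D) (at V)"
    using g2_differentiable[OF assms(1,2,4)] unfolding differentiable_def by blast
  have D: "(gfun \<sigma>2 P \<omega> H has_derivative D) (at V)"
  proof (rule has_derivative_transform_within_open[OF D2, of "UNIV - {0}"])
    show "open (UNIV - {0} :: (complex^'d^'m^'k) set)" by (simp add: open_delete)
    show "V \<in> UNIV - {0}" using assms(4) by simp
    fix W :: "complex^'d^'m^'k" assume "W \<in> UNIV - {0}"
    then have "W \<noteq> 0" by simp
    from gfun_eq_g2[OF assms(1,2) this] show "g2 \<sigma>2 P \<omega> H W = gfun \<sigma>2 P \<omega> H W"
      by (rule sym)
  qed
  have lin: "linear D" using has_derivative_bounded_linear[OF D] bounded_linear.linear by blast
  define G where "G = (\<Sum>b\<in>Basis. D b *\<^sub>R b)"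
  have DG: "D h = G \<bullet> h" for h
  proof -
    have "D h = D (\<Sum>b\<in>Basis. (h \<bullet> b) *\<^sub>R b)" by (simp add: euclidean_representation)
    also have "\<dots> = (\<Sum>b\<in>Basis. (h \<bullet> b) * D b)"
      by (simp add: linear_sum[OF lin] linear_scale[OF lin])
    also have "\<dots> = (\<Sum>b\<in>Basis. (D b *\<^sub>R b) \<bullet> h)"
      by (intro sum.cong refl) (simp add: inner_commute)
    also have "\<dots> = G \<bullet> h"
      by (simp add: G_def inner_sum_left)
    finally show ?thesis .
  qed
  have "D = (\<lambda>h. G \<bullet> h)" using DG by auto
  then have DG': "(gfun \<sigma>2 P \<omega> H has_derivative (\<lambda>h. G \<bullet> h)) (at V)" using D by simp
  have DV: "D V = 0"
  proof -
    have D0: "(gfun \<sigma>2 P \<omega> H has_derivative D) (at (V + (0::real) *\<^sub>R V))" using D by simp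
    have "((\<lambda>t::real. V + t *\<^sub>R V) has_derivative (\<lambda>t. t *\<^sub>R V)) (at 0)"
      by (auto intro!: derivative_eq_intros)
    from has_derivative_compose[OF this D0]
    have phi: "((\<lambda>t::real. gfun \<sigma>2 P \<omega> H (V + t *\<^sub>R V)) has_derivative (\<lambda>t. D (t *\<^sub>R V))) (at 0)" .
    have cst: "((\<lambda>t::real. gfun \<sigma>2 P \<omega> H V) has_derivative (\<lambda>t. D (t *\<^sub>R V))) (at 0)"
    proof (rule has_derivative_transform_within_open[OF phi, of "ball 0 1"])
      show "open (ball (0::real) 1)" by simp
      show "(0::real) \<in> ball 0 1" by simp
      fix t :: real assume "t \<in> ball 0 1"
      then have t: "1 + t \<noteq> 0" by (auto simp: dist_real_def)
      have c0: "complex_of_real (1 + t) \<noteq> 0" using t by (simp only: of_real_eq_0_iff not_False_eq_True)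
      have eq: "V + t *\<^sub>R V = cscale (complex_of_real (1 + t)) V"
        by (simp add: vec_eq_iff cscale_def; simp add: scaleR_conv_of_real algebra_simps)
      show "gfun \<sigma>2 P \<omega> H (V + t *\<^sub>R V) = gfun \<sigma>2 P \<omega> H V"
        unfolding eq by (rule sym[OF gfun_scale[OF assms(1,2,4) c0]])
    qed
    have "((\<lambda>t::real. gfun \<sigma>2 P \<omega> H V) has_derivative (\<lambda>t. 0)) (at 0)"
      by (rule has_derivative_const)
    from has_derivative_unique[OF cst this] have "(\<lambda>t::real. D (t *\<^sub>R V)) = (\<lambda>t. 0)" .
    then have "D ((1::real) *\<^sub>R V) = 0" by metis
    then show ?thesis by simp
  qed
  show "\<exists>G. (gfun \<sigma>2 P \<omega> H has_derivative (\<lambda>h. G \<bullet> h)) (at V) \<and> G \<bullet> V = 0"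
    using DG' DV DG by auto
qed

end
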